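(* Let $G=(V,E)$ be a graph with $n$ vertices, $m$ edges and maximum degree $\Delta$. The deterministic variant of Procedure Edge-Coloring with parameter $h\le\log\Delta$ computes a proper $(\Delta+3\cdot2^h)$-edge-coloring of $G$ in $O\left(\frac{m\Delta\log n}{2^h}\right)$ time.
   Context: Logarithms are base 2. A proper $k$-edge-coloring is a map $\varphi:E\to\{1,\dots,k\}$ with distinct colors on distinct edges sharing an endpoint. A degree-splitting of $H$ with discrepancy $\kappa$ is a partition $(E_1,E_2)$ of $E(H)$ with $|\deg_{E_1}(v)-\deg_{E_2}(v)|\le\kappa$ for all $v$. Procedure Edge-Coloring$(H,h)$: if $h=0$, return a proper $(\Delta(H)+1)$-edge-coloring of $H$ with palette $\{1,\dots,\Delta(H)+1\}$ computed by a base-case subroutine. Otherwise compute in $O(|E(H)|)$ time a degree-splitting $(E_1,E_2)$ of $H$ with discrepancy at most 2 and $\{|E_1|,|E_2|\}=\{\lfloor |E(H)|/2\rfloor,\lceil |E(H)|/2\rceil\}$; let $H_1=(V(H),E_1)$, $H_2=(V(H),E_2)$ with isolated vertices discarded; compute $\varphi_1=$ Edge-Coloring$(H_1,h-1)$, $\varphi_2=$ Edge-Coloring$(H_2,h-1)$; return $\varphi=\varphi_1$ on $E_1$ and $\varphi=p_1+\varphi_2$ on $E_2$, where $p_1$ is the palette size of $\varphi_1$. Deterministic variant: the base-case subroutine is a deterministic algorithm computing a proper $(\Delta'+1)$-edge-coloring of a graph with $n'$ vertices, $m'$ edges and maximum degree $\Delta'$ in $O(m'\Delta'\log n')$ time.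 *)

theory Defs
  imports Complex_Main
begin

text \<open>Graphs are represented by edge sets: an edge is a 2-element vertex set.
  A subgraph with isolated vertices discarded is represented by its edge set F,
  whose vertex set is the union of F.\<close>

definition edge_set :: "'a set set \<Rightarrow> bool" where
  "edge_set F \<longleftrightarrow> finite F \<and> (\<forall>e\<in>F. card e = 2)"

definition simple_graph :: "'a set \<Rightarrow> 'a set set \<Rightarrow> bool" where
  "simple_graph V E \<longleftrightarrow> finite V \<and> E \<subseteq> {e. e \<subseteq> V \<and> card e = 2}"

definition deg :: "'a set set \<Rightarrow> 'a \<Rightarrow> nat" where
  "deg F v = card {e \<in> F. v \<in> e}"

definition max_deg :: "'a set set \<Rightarrow> nat" where
  "max_deg F = Max (insert 0 (deg F ` (\<Union>F)))"

definition proper_edge_coloring :: "'a set set \<Rightarrow> ('a set \<Rightarrow> nat) \<Rightarrow> nat \<Rightarrow> bool" where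
  "proper_edge_coloring F \<phi> k \<longleftrightarrow>
     (\<forall>e\<in>F. \<phi> e \<in> {1..k}) \<and>
     (\<forall>e\<in>F. \<forall>e'\<in>F. e \<noteq> e' \<and> e \<inter> e' \<noteq> {} \<longrightarrow> \<phi> e \<noteq> \<phi> e')"

definition splitter_ok :: "('a set set \<Rightarrow> 'a set set) \<Rightarrow> bool" where
  "splitter_ok sp \<longleftrightarrow> (\<forall>F. edge_set F \<longrightarrow>
      sp F \<subseteq> F \<and>
      card (sp F) \<in> {card F div 2, (card F + 1) div 2} \<and>
      (\<forall>v. \<bar>int (deg (sp F) v) - int (deg (F - sp F) v)\<bar> \<le> 2))"

definition base_ok :: "('a set set \<Rightarrow> 'a set \<Rightarrow> nat) \<Rightarrow> bool" where
  "base_ok b \<longleftrightarrow> (\<forall>F. edge_set F \<longrightarrow> proper_edge_coloring F (b F) (max_deg F + 1))"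

fun edge_coloring ::
  "('a set set \<Rightarrow> 'a set set) \<Rightarrow> ('a set set \<Rightarrow> 'a set \<Rightarrow> nat) \<Rightarrow> nat \<Rightarrow> 'a set set
     \<Rightarrow> ('a set \<Rightarrow> nat) \<times> nat" where
  "edge_coloring sp b 0 F = (b F, max_deg F + 1)"
| "edge_coloring sp b (Suc h) F =
     (let E1 = sp F; E2 = F - E1;
          (\<phi>1, p1) = edge_coloring sp b h E1;
          (\<phi>2, p2) = edge_coloring sp b h E2
      in (\<lambda>e. if e \<in> E1 then \<phi>1 e else p1 + \<phi>2 e, p1 + p2))"

text \<open>Running time of the procedure, given the cost tsp F of the splitting step
  (including recombination) on F and the cost tb F of the base case on F.\<close>
fun edge_coloring_time ::
  "('a set set \<Rightarrow> 'a set set) \<Rightarrow> ('a set set \<Rightarrow> real) \<Rightarrow> ('a set set \<Rightarrow> real) \<Rightarrow> nat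
     \<Rightarrow> 'a set set \<Rightarrow> real" where
  "edge_coloring_time sp tsp tb 0 F = tb F"
| "edge_coloring_time sp tsp tb (Suc h) F =
     tsp F + edge_coloring_time sp tsp tb h (sp F) + edge_coloring_time sp tsp tb h (F - sp F)"

end

theory Submission
  imports Defs
begin

lemma edge_set_sub: "edge_set F \<Longrightarrow> G \<subseteq> F \<Longrightarrow> edge_set G"
  unfolding edge_set_def by (auto intro: finite_subset)

lemma edge_set_Union_finite: "edge_set F \<Longrightarrow> finite (\<Union>F)"
  proof -
  assume "edge_set F"
  then have "\<forall>e\<in>F. finite e" "finite F" unfolding edge_set_def by (auto intro: card_ge_0_finite)
  then show ?thesis by blast
qed

lemma deg_le_max: "finite (\<Union>F) \<Longrightarrow> deg F v \<le> max_deg F"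
proof (cases "v \<in> \<Union>F")
  case True
  assume "finite (\<Union>F)"
  then show ?thesis unfolding max_deg_def using True by (intro Max_ge) auto
next
  case False
  then have "{e \<in> F. v \<in> e} = {}" by auto
  then have "deg F v = 0" unfolding deg_def by (metis card.empty)
  then show ?thesis by simp
qed

lemma max_deg_bound: assumes "finite (\<Union>G)" "\<And>v. 2 * deg G v \<le> X"
  shows "2 * max_deg G \<le> X"
proof -
  have "max_deg G \<in> insert 0 (deg G ` (\<Union>G))"
    unfolding max_deg_def using assms(1) by (intro Max_in) auto
  then show ?thesis using assms(2) by auto
qed

lemma deg_split: assumes "finite F" "E1 \<subseteq> F"
  shows "deg F v = deg E1 v + deg (F - E1) v"
proof -
  have "{e \<in> F. v \<in> e} = {e \<in> E1. v \<in> e} \<union> {e \<in> F - E1. v \<in> e}" using assms by auto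
  moreover have "finite {e \<in> E1. v \<in> e}" "finite {e \<in> F - E1. v \<in> e}"
    using assms by (auto intro: finite_subset[of _ F])
  ultimately show ?thesis unfolding deg_def by (simp add: card_Un_disjoint disjoint_iff)
qed

lemma split_deg: assumes "splitter_ok sp" "edge_set F"
  shows "2 * max_deg (sp F) \<le> max_deg F + 2" "2 * max_deg (F - sp F) \<le> max_deg F + 2"
    "sp F \<subseteq> F" "edge_set (sp F)" "edge_set (F - sp F)"
    "card (sp F) + card (F - sp F) = card F"
proof -
  have sub: "sp F \<subseteq> F" and dis: "\<And>v. \<bar>int (deg (sp F) v) - int (deg (F - sp F) v)\<bar> \<le> 2"
    using assms unfolding splitter_ok_def by auto
  have fin: "finite F" using assms(2) unfolding edge_set_def by auto
  have fU: "finite (\<Union>F)" using edge_set_Union_finite assms(2) .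
  have ds: "\<And>v. deg F v = deg (sp F) v + deg (F - sp F) v" using deg_split[OF fin sub] .
  have dm: "\<And>v. deg F v \<le> max_deg F" using deg_le_max[OF fU] .
  show "2 * max_deg (sp F) \<le> max_deg F + 2"
  proof (rule max_deg_bound)
    show "finite (\<Union>(sp F))" using fU sub by (meson Union_mono finite_subset)
    fix v show "2 * deg (sp F) v \<le> max_deg F + 2" using ds[of v] dm[of v] dis[of v] by linarith
  qed
  show "2 * max_deg (F - sp F) \<le> max_deg F + 2"
  proof (rule max_deg_bound)
    show "finite (\<Union>(F - sp F))" using fU by (meson Union_mono Diff_subset finite_subset)
    fix v show "2 * deg (F - sp F) v \<le> max_deg F + 2" using ds[of v] dm[of v] dis[of v] by linarith
  qed
  show "sp F \<subseteq> F" by fact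
  show "edge_set (sp F)" "edge_set (F - sp F)" using edge_set_sub[OF assms(2)] sub by auto
  show "card (sp F) + card (F - sp F) = card F"
    using fin sub by (metis card_Diff_subset card_mono finite_subset le_add_diff_inverse)
qed

lemma palette: assumes "splitter_ok sp" "base_ok b"
  shows "edge_set F \<Longrightarrow> snd (edge_coloring sp b h F) + 2 \<le> max_deg F + 3 * 2 ^ h
     \<and> proper_edge_coloring F (fst (edge_coloring sp b h F)) (snd (edge_coloring sp b h F))"
proof (induction h arbitrary: F)
  case 0
  then show ?case using assms(2) unfolding base_ok_def by simp
next
  case (Suc h)
  note s = split_deg[OF assms(1) Suc.prems]
  obtain \<phi>1 p1 where e1: "edge_coloring sp b h (sp F) = (\<phi>1, p1)" by fastforce
  obtain \<phi>2 p2 where e2: "edge_coloring sp b h (F - sp F) = (\<phi>2, p2)" by fastforce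
  have I1: "p1 + 2 \<le> max_deg (sp F) + 3 * 2 ^ h" "proper_edge_coloring (sp F) \<phi>1 p1"
    using Suc.IH[OF s(4)] e1 by auto
  have I2: "p2 + 2 \<le> max_deg (F - sp F) + 3 * 2 ^ h" "proper_edge_coloring (F - sp F) \<phi>2 p2"
    using Suc.IH[OF s(5)] e2 by auto
  have ec: "edge_coloring sp b (Suc h) F = (\<lambda>e. if e \<in> sp F then \<phi>1 e else p1 + \<phi>2 e, p1 + p2)"
    using e1 e2 by (simp add: Let_def)
  have "p1 + p2 + 2 \<le> max_deg F + 3 * 2 ^ Suc h" using I1(1) I2(1) s(1,2) by simp
  moreover have "proper_edge_coloring F (\<lambda>e. if e \<in> sp F then \<phi>1 e else p1 + \<phi>2 e) (p1 + p2)"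
  proof -
    have r1: "\<forall>e\<in>sp F. \<phi>1 e \<in> {1..p1}" and r2: "\<forall>e\<in>F - sp F. \<phi>2 e \<in> {1..p2}"
      and q1: "\<forall>e\<in>sp F. \<forall>e'\<in>sp F. e \<noteq> e' \<and> e \<inter> e' \<noteq> {} \<longrightarrow> \<phi>1 e \<noteq> \<phi>1 e'"
      and q2: "\<forall>e\<in>F - sp F. \<forall>e'\<in>F - sp F. e \<noteq> e' \<and> e \<inter> e' \<noteq> {} \<longrightarrow> \<phi>2 e \<noteq> \<phi>2 e'"
      using I1(2) I2(2) unfolding proper_edge_coloring_def by auto
    show ?thesis unfolding proper_edge_coloring_def
    proof (intro conjI ballI impI)
      fix e assume "e \<in> F"
      then show "(if e \<in> sp F then \<phi>1 e else p1 + \<phi>2 e) \<in> {1..p1 + p2}"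
        proof (cases "e \<in> sp F")
        case False
        then have "\<phi>2 e \<in> {1..p2}" using r2 \<open>e \<in> F\<close> by blast
        then show ?thesis using False by auto
      qed (use r1 in auto)
    next
      fix e e' assume "e \<in> F" "e' \<in> F" "e \<noteq> e' \<and> e \<inter> e' \<noteq> {}"
      then show "(if e \<in> sp F then \<phi>1 e else p1 + \<phi>2 e) \<noteq> (if e' \<in> sp F then \<phi>1 e' else p1 + \<phi>2 e')"
        proof (cases "e \<in> sp F"; cases "e' \<in> sp F")
          assume "e \<in> sp F" "e' \<notin> sp F"
          then have "\<phi>1 e \<le> p1" "1 \<le> \<phi>2 e'" using r1 r2 \<open>e' \<in> F\<close> by auto
          then show ?thesis using \<open>e \<in> sp F\<close> \<open>e' \<notin> sp F\<close> by auto
        next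
          assume "e' \<in> sp F" "e \<notin> sp F"
          then have "\<phi>1 e' \<le> p1" "1 \<le> \<phi>2 e" using r1 r2 \<open>e \<in> F\<close> by auto
          then show ?thesis using \<open>e' \<in> sp F\<close> \<open>e \<notin> sp F\<close> by auto
        next
          assume "e \<in> sp F" "e' \<in> sp F"
          then show ?thesis using q1 \<open>e \<noteq> e' \<and> e \<inter> e' \<noteq> {}\<close> by auto
        next
          assume "e \<notin> sp F" "e' \<notin> sp F"
          then show ?thesis using q2 \<open>e \<in> F\<close> \<open>e' \<in> F\<close> \<open>e \<noteq> e' \<and> e \<inter> e' \<noteq> {}\<close> by auto
        qed
    qed
  qed
  ultimately show ?case using ec by simp
qed


lemma time_bound:
  fixes c :: real
  assumes sp: "splitter_ok sp" and c: "c \<ge> 0"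
    and tsp: "\<forall>F. edge_set F \<longrightarrow> tsp F \<le> c * card F"
    and tb: "\<forall>F. edge_set F \<longrightarrow> tb F \<le> c * card F * max_deg F * log 2 (card (\<Union>F))"
    and N: "N \<ge> 1"
  shows "edge_set F \<Longrightarrow> card (\<Union>F) \<le> N \<Longrightarrow>
    edge_coloring_time sp tsp tb h F \<le> c * card F * h
      + c * card F * ((real (max_deg F) + 2 ^ (h+1) - 2) / 2 ^ h) * log 2 N"
proof (induction h arbitrary: F)
  case 0
  show ?case
  proof (cases "F = {}")
    case True
    then show ?thesis using tb[rule_format, OF 0(1)] by simp
  next
    case False
    then obtain e where e: "e \<in> F" by auto
    then have "card e = 2" using 0 by (auto simp: edge_set_def)
    then have "e \<noteq> {}" by auto
    then have "\<Union>F \<noteq> {}" using e by auto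
    then have "card (\<Union>F) \<ge> 1" using edge_set_Union_finite[OF 0(1)]
      by (simp add: Suc_leI card_gt_0_iff)
    then have l: "0 \<le> log 2 (card (\<Union>F))" "log 2 (card (\<Union>F)) \<le> log 2 N"
      using 0(2) by auto
    have "tb F \<le> c * card F * max_deg F * log 2 (card (\<Union>F))" using tb 0 by auto
    also have "\<dots> \<le> c * card F * max_deg F * log 2 N"
      using l c by (intro mult_left_mono) auto
    finally show ?thesis by simp
  qed
next
  case (Suc h)
  note s = split_deg[OF sp Suc.prems(1)]
  have fU: "finite (\<Union>F)" using edge_set_Union_finite Suc.prems(1) .
  have c1: "card (\<Union>(sp F)) \<le> N"
    using Suc.prems(2) s(3) fU by (meson Union_mono card_mono le_trans)
  have c2: "card (\<Union>(F - sp F)) \<le> N"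
    using Suc.prems(2) fU by (meson Union_mono Diff_subset card_mono le_trans)
  define lg where "lg = log 2 (real N)"
  have lg: "lg \<ge> 0" using N lg_def by simp
  define K where "K = (real (max_deg F) + 2 ^ (Suc h + 1) - 2) / 2 ^ Suc h"
  have K1: "(real (max_deg (sp F)) + 2 ^ (h+1) - 2) / 2 ^ h \<le> K"
  proof -
    have "2 * real (max_deg (sp F)) \<le> real (max_deg F) + 2" using s(1) by linarith
    then have "2 * real (max_deg (sp F)) * 2 ^ h \<le> (real (max_deg F) + 2) * 2 ^ h"
      by (intro mult_right_mono) auto
    then show ?thesis unfolding K_def by (simp add: field_simps)
  qed
  have K2: "(real (max_deg (F - sp F)) + 2 ^ (h+1) - 2) / 2 ^ h \<le> K"
  proof -
    have "2 * real (max_deg (F - sp F)) \<le> real (max_deg F) + 2" using s(2) by linarith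
    then have "2 * real (max_deg (F - sp F)) * 2 ^ h \<le> (real (max_deg F) + 2) * 2 ^ h"
      by (intro mult_right_mono) auto
    then show ?thesis unfolding K_def by (simp add: field_simps)
  qed
  have I1: "edge_coloring_time sp tsp tb h (sp F) \<le> c * card (sp F) * h + c * card (sp F) * K * lg"
  proof -
    have "c * card (sp F) * ((real (max_deg (sp F)) + 2 ^ (h+1) - 2) / 2 ^ h) * lg \<le> c * card (sp F) * K * lg"
      using K1 c lg by (intro mult_right_mono mult_left_mono) auto
    then show ?thesis using Suc.IH[OF s(4) c1] unfolding lg_def by linarith
  qed
  have I2: "edge_coloring_time sp tsp tb h (F - sp F) \<le> c * card (F - sp F) * h + c * card (F - sp F) * K * lg"
  proof -
    have "c * card (F - sp F) * ((real (max_deg (F - sp F)) + 2 ^ (h+1) - 2) / 2 ^ h) * lg \<le> c * card (F - sp F) * K * lg"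
      using K2 c lg by (intro mult_right_mono mult_left_mono) auto
    then show ?thesis using Suc.IH[OF s(5) c2] unfolding lg_def by linarith
  qed
  have T: "tsp F \<le> c * card F" using tsp Suc.prems by auto
  have cs: "real (card (sp F)) + real (card (F - sp F)) = real (card F)" using s(6) by (metis of_nat_add)
  have "edge_coloring_time sp tsp tb (Suc h) F \<le> c * card F + (c * card (sp F) * h + c * card (sp F) * K * lg)
     + (c * card (F - sp F) * h + c * card (F - sp F) * K * lg)"
    using I1 I2 T by simp
  also have "\<dots> = c * card F * (Suc h) + c * card F * K * lg"
    unfolding cs[symmetric] of_nat_Suc by (simp add: algebra_simps)
  finally show ?case unfolding K_def lg_def by simp
qed


lemma deg_le_card: assumes "simple_graph V E" shows "deg E v \<le> card V"
proof -
  have fV: "finite V" using assms by (simp add: simple_graph_def)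
  have "{e \<in> E. v \<in> e} \<subseteq> (\<lambda>u. {v, u}) ` V"
  proof
    fix e assume "e \<in> {e \<in> E. v \<in> e}"
    then have e: "e \<in> E" "v \<in> e" by auto
    then have "e \<subseteq> V" "card e = 2" using assms by (auto simp: simple_graph_def)
    then obtain x y where xy: "e = {x, y}" "x \<noteq> y" by (meson card_2_iff)
    then show "e \<in> (\<lambda>u. {v, u}) ` V" using e \<open>e \<subseteq> V\<close> by (auto simp: insert_commute)
  qed
  then have "deg E v \<le> card ((\<lambda>u. {v, u}) ` V)" unfolding deg_def
    using fV by (intro card_mono) auto
  also have "\<dots> \<le> card V" using card_image_le fV by blast
  finally show ?thesis .
qed

lemma max_deg_le_card: assumes "simple_graph V E" shows "max_deg E \<le> card V"
proof -
  have fV: "finite V" using assms by (simp add: simple_graph_def)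
  have "\<Union>E \<subseteq> V" using assms by (auto simp: simple_graph_def)
  then have "finite (\<Union>E)" using fV finite_subset by blast
  then have "max_deg E \<in> insert 0 (deg E ` (\<Union>E))"
    unfolding max_deg_def by (intro Max_in) auto
  then show ?thesis using deg_le_card[OF assms] by auto
qed

theorem corollary3p9:
  fixes c :: real
  assumes "c \<ge> 0"
  shows "\<exists>C::real. \<forall>(V::'a set) E h sp b tsp tb.
    simple_graph V E \<and> 2 ^ h \<le> max_deg E \<and>
    splitter_ok sp \<and> base_ok b \<and>
    (\<forall>F. edge_set F \<longrightarrow> tsp F \<le> c * card F) \<and>
    (\<forall>F. edge_set F \<longrightarrow> tb F \<le> c * card F * max_deg F * log 2 (card (\<Union>F)))
    \<longrightarrow>
    proper_edge_coloring E (fst (edge_coloring sp b h E)) (max_deg E + 3 * 2 ^ h) \<and>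
    edge_coloring_time sp tsp tb h E \<le> C * (card E * max_deg E * log 2 (card V) / 2 ^ h)"
proof (intro exI[of _ "4 * c"] allI impI, elim conjE)
  fix V :: "'a set" and E :: "'a set set" and h :: nat and sp :: "'a set set \<Rightarrow> 'a set set"
    and b :: "'a set set \<Rightarrow> 'a set \<Rightarrow> nat" and tsp tb :: "'a set set \<Rightarrow> real"
  assume G: "simple_graph V E" and hD: "2 ^ h \<le> max_deg E" and sp: "splitter_ok sp"
    and b: "base_ok b" and tsp: "\<forall>F. edge_set F \<longrightarrow> tsp F \<le> c * card F"
    and tb: "\<forall>F. edge_set F \<longrightarrow> tb F \<le> c * card F * max_deg F * log 2 (card (\<Union>F))"
  have fV: "finite V" using G by (simp add: simple_graph_def)
  have UV: "\<Union>E \<subseteq> V" using G by (auto simp: simple_graph_def)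
  have "E \<subseteq> Pow V" using UV by auto
  then have "finite E" using fV by (meson finite_Pow_iff finite_subset)
  then have es: "edge_set E" using G by (auto simp: edge_set_def simple_graph_def)
  have P: "snd (edge_coloring sp b h E) + 2 \<le> max_deg E + 3 * 2 ^ h"
    "proper_edge_coloring E (fst (edge_coloring sp b h E)) (snd (edge_coloring sp b h E))"
    using palette[OF sp b es] by auto
  have PC: "proper_edge_coloring E (fst (edge_coloring sp b h E)) (max_deg E + 3 * 2 ^ h)"
    using P unfolding proper_edge_coloring_def by fastforce
  define n where "n = card V"
  define D where "D = max_deg E"
  define m where "m = card E"
  have Dn: "D \<le> n" using max_deg_le_card[OF G] unfolding D_def n_def .
  have hD': "(2::real) ^ h \<le> real D" using hD unfolding D_def
    by (metis of_nat_le_iff of_nat_numeral of_nat_power)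
  have n1: "n \<ge> 1" using hD Dn unfolding D_def
    by (metis le_trans one_le_numeral one_le_power)
  have cU: "card (\<Union>E) \<le> n" unfolding n_def using UV fV card_mono by blast
  define lg where "lg = log 2 (real n)"
  have lg0: "lg \<ge> 0" using n1 lg_def by simp
  have hl: "real h \<le> lg"
  proof -
    have "real h = log 2 (2 ^ h)" by simp
    also have "\<dots> \<le> lg" unfolding lg_def
    proof (rule log_mono)
      show "(0::real) < 2 ^ h" by simp
      show "(2::real) ^ h \<le> real n" using hD' Dn by linarith
    qed simp
    finally show ?thesis .
  qed
  have T: "edge_coloring_time sp tsp tb h E \<le> c * m * h
      + c * m * ((real D + 2 ^ (h+1) - 2) / 2 ^ h) * lg"
    using time_bound[OF sp assms tsp tb n1 es cU] unfolding m_def D_def lg_def by simp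
  have pos: "(0::real) < 2 ^ h" by simp
  have A: "real h \<le> real D / 2 ^ h * lg"
  proof -
    have "1 \<le> real D / 2 ^ h" using hD' pos by simp
    then have "1 * lg \<le> real D / 2 ^ h * lg" using lg0 by (intro mult_right_mono) auto
    then show ?thesis using hl by simp
  qed
  have B: "(real D + 2 ^ (h+1) - 2) / 2 ^ h \<le> 3 * real D / 2 ^ h"
  proof (rule divide_right_mono)
    have "(2::real) ^ (h+1) = 2 * 2 ^ h" by simp
    then show "real D + 2 ^ (h+1) - 2 \<le> 3 * real D" using hD' by linarith
  qed simp
  have cm: "0 \<le> c * m" using assms by simp
  have "c * m * h \<le> c * m * (real D / 2 ^ h * lg)" using A cm by (intro mult_left_mono) auto
  moreover have "c * m * ((real D + 2 ^ (h+1) - 2) / 2 ^ h) * lg \<le> c * m * (3 * real D / 2 ^ h) * lg"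
    using B cm lg0 by (intro mult_right_mono mult_left_mono) auto
  ultimately have "edge_coloring_time sp tsp tb h E \<le> c * m * (real D / 2 ^ h * lg) + c * m * (3 * real D / 2 ^ h) * lg"
    using T by linarith
  also have "\<dots> = 4 * c * (m * D * lg / 2 ^ h)" by (simp add: field_simps)
  finally have "edge_coloring_time sp tsp tb h E \<le> 4 * c * (card E * max_deg E * log 2 (card V) / 2 ^ h)"
    unfolding m_def D_def lg_def n_def .
  with PC show "proper_edge_coloring E (fst (edge_coloring sp b h E)) (max_deg E + 3 * 2 ^ h) \<and>
    edge_coloring_time sp tsp tb h E \<le> 4 * c * (card E * max_deg E * log 2 (card V) / 2 ^ h)" by blast
qed

end
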